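(* Consider a cellular network with $n$ base stations $\mathcal{N}=\{1,\dots,n\}$, base station $i$ serving a nonempty set $\mathcal{J}_i$ of users (pairwise disjoint), channel gains $g_{kj}>0$, noise power $\sigma^2>0$, and $$f_i(\mathbf{x};\mathbf{r},\mathbf{p})=\sum_{j\in\mathcal{J}_i}\frac{r_{ij}}{\log\Big(1+\frac{p_i g_{ij}}{\sum_{k\ne i} p_k g_{kj} x_k+\sigma^2}\Big)}.$$ Let a load vector $\mathbf{x}>\mathbf{0}$ and a rate vector $\mathbf{r}>\mathbf{0}$ be given. Then the power vectors $\mathbf{p}>\mathbf{0}$ satisfying $\mathbf{x}=\mathbf{f}(\mathbf{x};\mathbf{r},\mathbf{p})$ are exactly those satisfying the non-linear power coupling equation (NPCE) $\mathbf{p}=\mathbf{h}(\mathbf{p};\mathbf{x},\mathbf{r})$, where $\mathbf{h}(\cdot;\mathbf{x},\mathbf{r})$ is a standard interference function. Moreover, if a solution $\mathbf{p}$ exists, then it is unique and is obtained as the limit of the iterative algorithm for power (IAP): both the synchronous iteration $\mathbf{p}^{\ell}=\mathbf{h}(\mathbf{p}^{\ell-1};\mathbf{x},\mathbf{r})$, $\ell=1,2,\dots$, and the asynchronous iteration (in which, in each outer iteration, the components $i=1,\dots,n$ are updated one at a time by $p_i\leftarrow h_i(\bar{\mathbf{p}}_i;\mathbf{x},\mathbf{r})$ using the most recently updated values of the other components) converge to $\mathbf{p}$ from any initial power vector $\mathbf{p}^0>\mathbf{0}$.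
   Context: Vector inequalities are componentwise; $\log$ is natural logarithm. For a vector $\mathbf{p}$, $\bar{\mathbf{p}}_i\in\mathbb{R}^{n-1}$ denotes $\mathbf{p}$ with its $i$th component removed. For $\bar{\mathbf{p}}_i\ge\mathbf{0}$, $h_i(\bar{\mathbf{p}}_i;\mathbf{x},\mathbf{r})$ is defined as the unique $p_i>0$ satisfying $$1=\eta_i(p_i):=\sum_{j\in\mathcal{J}_i}\frac{r_{ij}/x_i}{\log\big(1+p_i\, g_{ij}/(\sum_{k\ne i}p_kg_{kj}x_k+\sigma^2)\big)}$$ (equivalently $x_i=f_i(\mathbf{x};\mathbf{r},\mathbf{p})$), and $\mathbf{h}(\mathbf{p};\mathbf{x},\mathbf{r})=(h_1(\bar{\mathbf{p}}_1;\mathbf{x},\mathbf{r}),\dots,h_n(\bar{\mathbf{p}}_n;\mathbf{x},\mathbf{r}))^T$. A function $\mathbf{I}:\mathbb{R}^n_+\to\mathbb{R}^n_+$ is a standard interference function if for all $\mathbf{p}\ge\mathbf{0}$: (positivity) $\mathbf{I}(\mathbf{p})>\mathbf{0}$; (monotonicity) $\mathbf{p}\ge\mathbf{p}'$ implies $\mathbf{I}(\mathbf{p})\ge\mathbf{I}(\mathbf{p}')$; (scalability) for all $\alpha>1$, $\alpha\mathbf{I}(\mathbf{p})>\mathbf{I}(\alpha\mathbf{p})$. *)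

theory Defs
  imports Complex_Main
begin

text \<open>Base stations are indexed by a finite linearly ordered type 'n (the order
  fixes the update order 1,...,n of the asynchronous iteration); users by a type 'u.\<close>

definition load_f ::
  "('n::finite \<Rightarrow> 'u \<Rightarrow> real) \<Rightarrow> real \<Rightarrow> ('n \<Rightarrow> 'u set) \<Rightarrow>
   ('n \<Rightarrow> real) \<Rightarrow> ('n \<Rightarrow> 'u \<Rightarrow> real) \<Rightarrow> ('n \<Rightarrow> real) \<Rightarrow> 'n \<Rightarrow> real" where
  "load_f g \<sigma>2 J x r p i =
     (\<Sum>j\<in>J i. r i j /
        ln (1 + p i * g i j / ((\<Sum>k\<in>UNIV - {i}. p k * g k j * x k) + \<sigma>2)))"

text \<open>eta_i(q), where q plays the role of p_i and p supplies the other components.\<close>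
definition eta ::
  "('n::finite \<Rightarrow> 'u \<Rightarrow> real) \<Rightarrow> real \<Rightarrow> ('n \<Rightarrow> 'u set) \<Rightarrow>
   ('n \<Rightarrow> real) \<Rightarrow> ('n \<Rightarrow> 'u \<Rightarrow> real) \<Rightarrow> ('n \<Rightarrow> real) \<Rightarrow> 'n \<Rightarrow> real \<Rightarrow> real" where
  "eta g \<sigma>2 J x r p i q =
     (\<Sum>j\<in>J i. (r i j / x i) /
        ln (1 + q * g i j / ((\<Sum>k\<in>UNIV - {i}. p k * g k j * x k) + \<sigma>2)))"

text \<open>h_i(p-bar_i; x, r): the unique q > 0 with eta_i(q) = 1 (depends only on p_k, k \<noteq> i).\<close>
definition h_comp ::
  "('n::finite \<Rightarrow> 'u \<Rightarrow> real) \<Rightarrow> real \<Rightarrow> ('n \<Rightarrow> 'u set) \<Rightarrow>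
   ('n \<Rightarrow> real) \<Rightarrow> ('n \<Rightarrow> 'u \<Rightarrow> real) \<Rightarrow> ('n \<Rightarrow> real) \<Rightarrow> 'n \<Rightarrow> real" where
  "h_comp g \<sigma>2 J x r p i = (THE q. q > 0 \<and> eta g \<sigma>2 J x r p i q = 1)"

definition h_vec ::
  "('n::finite \<Rightarrow> 'u \<Rightarrow> real) \<Rightarrow> real \<Rightarrow> ('n \<Rightarrow> 'u set) \<Rightarrow>
   ('n \<Rightarrow> real) \<Rightarrow> ('n \<Rightarrow> 'u \<Rightarrow> real) \<Rightarrow> ('n \<Rightarrow> real) \<Rightarrow> ('n \<Rightarrow> real)" where
  "h_vec g \<sigma>2 J x r p = (\<lambda>i. h_comp g \<sigma>2 J x r p i)"

definition iap_async_sweep ::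
  "('n::{finite,linorder} \<Rightarrow> 'u \<Rightarrow> real) \<Rightarrow> real \<Rightarrow> ('n \<Rightarrow> 'u set) \<Rightarrow>
   ('n \<Rightarrow> real) \<Rightarrow> ('n \<Rightarrow> 'u \<Rightarrow> real) \<Rightarrow> ('n \<Rightarrow> real) \<Rightarrow> ('n \<Rightarrow> real)" where
  "iap_async_sweep g \<sigma>2 J x r p =
     fold (\<lambda>i q. q(i := h_comp g \<sigma>2 J x r q i)) (sorted_list_of_set (UNIV :: 'n set)) p"

definition standard_interference :: "(('n \<Rightarrow> real) \<Rightarrow> ('n \<Rightarrow> real)) \<Rightarrow> bool" where
  "standard_interference I \<longleftrightarrow>
     (\<forall>p. (\<forall>i. p i \<ge> 0) \<longrightarrow> (\<forall>i. I p i > 0)) \<and>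
     (\<forall>p p'. (\<forall>i. p' i \<ge> 0) \<and> (\<forall>i. p' i \<le> p i) \<longrightarrow> (\<forall>i. I p' i \<le> I p i)) \<and>
     (\<forall>p. (\<forall>i. p i \<ge> 0) \<longrightarrow> (\<forall>\<alpha>::real. \<alpha> > 1 \<longrightarrow> (\<forall>i. \<alpha> * I p i > I (\<lambda>k. \<alpha> * p k) i)))"

end

theory Submission
  imports Defs
begin


lemma si_pos: "standard_interference T \<Longrightarrow> (\<forall>i. p i \<ge> 0) \<Longrightarrow> T p i > 0"
  unfolding standard_interference_def by blast
lemma si_mono: "standard_interference T \<Longrightarrow> (\<forall>i. p' i \<ge> 0) \<Longrightarrow> (\<forall>i. p' i \<le> p i) \<Longrightarrow> T p' i \<le> T p i"
  unfolding standard_interference_def by blast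
lemma si_scal: "standard_interference T \<Longrightarrow> (\<forall>i. p i \<ge> 0) \<Longrightarrow> \<alpha> > 1 \<Longrightarrow> \<alpha> * T p i > T (\<lambda>k. \<alpha> * p k) i"
  unfolding standard_interference_def by blast

lemma si_fix_le:
  fixes T :: "('n::finite \<Rightarrow> real) \<Rightarrow> ('n \<Rightarrow> real)"
  assumes T: "standard_interference T" and p: "\<forall>i. p i > 0" "T p = p"
    and q: "\<forall>i. q i > 0" "T q = q"
  shows "q i \<le> p i"
proof -
  define m where "m = Max (range (\<lambda>i. q i / p i))"
  have mi: "m \<in> range (\<lambda>i. q i / p i)" unfolding m_def by (intro Max_in) auto
  then obtain i0 where i0: "m = q i0 / p i0" by auto
  have mge: "q i / p i \<le> m" for i unfolding m_def by (intro Max_ge) auto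
  have qle: "q i \<le> m * p i" for i using mge[of i] p(1) by (simp add: divide_le_eq)
  show ?thesis
  proof (cases "m \<le> 1")
    case True
    have "m * p i \<le> 1 * p i" by (rule mult_right_mono) (use True p(1) in \<open>auto intro: less_imp_le\<close>)
    then show ?thesis using qle[of i] by simp
  next
    case False
    have "q i0 = T q i0" using q by simp
    also have "\<dots> \<le> T (\<lambda>k. m * p k) i0"
      by (rule si_mono[OF T]) (use q(1) qle in \<open>auto intro: less_imp_le\<close>)
    also have "\<dots> < m * T p i0" using si_scal[OF T, of p m i0] p False by (auto intro: less_imp_le)
    also have "\<dots> = q i0" using p i0 by (simp add: less_imp_neq[symmetric])
    finally show ?thesis by simp
  qed
qed

lemma si_unique:
  fixes T :: "('n::finite \<Rightarrow> real) \<Rightarrow> ('n \<Rightarrow> real)"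
  assumes T: "standard_interference T" and p: "\<forall>i. p i > 0" "T p = p"
    and q: "\<forall>i. q i > 0" "T q = q"
  shows "q = p"
  using si_fix_le[OF T p q] si_fix_le[OF T q p] by (intro ext antisym) auto

lemma si_iter_nonneg:
  assumes T: "standard_interference T" and a: "\<forall>i. a i \<ge> 0"
  shows "(T ^^ l) a i \<ge> 0"
proof (induction l arbitrary: i)
  case 0 then show ?case using a by simp
next
  case (Suc l) then show ?case using si_pos[OF T, of "(T ^^ l) a" i] by (simp add: less_imp_le)
qed

lemma si_iter_mono:
  assumes T: "standard_interference T" and a: "\<forall>i. a i \<ge> 0" and ab: "\<forall>i. a i \<le> b i"
  shows "(T ^^ l) a i \<le> (T ^^ l) b i"
proof (induction l arbitrary: i)
  case 0 then show ?case using ab by simp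
next
  case (Suc l) then show ?case using si_mono[OF T, of "(T ^^ l) a" "(T ^^ l) b" i] si_iter_nonneg[OF T a]
    by simp
qed

lemma real_le_by_scale:
  fixes a b :: real
  assumes b: "b > 0" and h: "\<And>\<beta>. \<beta> > 1 \<Longrightarrow> a \<le> \<beta> * b"
  shows "a \<le> b"
proof (rule ccontr)
  assume "\<not> a \<le> b"
  then have ab: "a > b" by simp
  have "a \<le> ((a + b) / (2 * b)) * b" by (rule h) (use ab b in \<open>simp add: field_simps\<close>)
  also have "\<dots> = (a + b) / 2" using b by simp
  finally show False using ab by simp
qed

lemma si_upper:
  fixes T :: "('n::finite \<Rightarrow> real) \<Rightarrow> ('n \<Rightarrow> real)"
  assumes T: "standard_interference T" and p: "\<forall>i. p i > 0" "T p = p" and \<alpha>: "\<alpha> > 1"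
  shows "(\<lambda>l. (T ^^ l) (\<lambda>k. \<alpha> * p k) i) \<longlonglongrightarrow> p i"
proof -
  define a where "a = (\<lambda>k. \<alpha> * p k)"
  have a0: "\<forall>i. a i \<ge> 0" using p \<alpha> unfolding a_def by (simp add: less_imp_le)
  have Ta: "\<forall>i. T a i \<le> a i" using si_scal[OF T, of p \<alpha>] p \<alpha> unfolding a_def
    by (auto simp: less_imp_le)
  have pa: "\<forall>i. p i \<le> a i" using p \<alpha> unfolding a_def by (simp add: less_imp_le)
  have dec: "(T ^^ Suc l) a i \<le> (T ^^ l) a i" for l i
  proof -
    have "(T ^^ l) (T a) i \<le> (T ^^ l) a i"
      by (rule si_iter_mono[OF T]) (use si_pos[OF T a0] Ta in \<open>auto intro: less_imp_le\<close>)
    then show ?thesis by (simp add: funpow_Suc_right del: funpow.simps)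
  qed
  have low: "p i \<le> (T ^^ l) a i" for l i
  proof -
    have "(T ^^ l) p i \<le> (T ^^ l) a i" by (rule si_iter_mono[OF T]) (use p pa in \<open>auto intro: less_imp_le\<close>)
    moreover have "(T ^^ l) p = p" by (induction l) (use p in auto)
    ultimately show ?thesis by simp
  qed
  have "\<forall>i. \<exists>L. (\<lambda>l. (T ^^ l) a i) \<longlonglongrightarrow> L \<and> (\<forall>l. L \<le> (T ^^ l) a i)"
  proof
    fix i
    have "decseq (\<lambda>l. (T ^^ l) a i)" by (rule decseq_SucI) (use dec in auto)
    then obtain L where "(\<lambda>l. (T ^^ l) a i) \<longlonglongrightarrow> L" "\<forall>l. L \<le> (T ^^ l) a i"
      using decseq_convergent[of "\<lambda>l. (T ^^ l) a i" "p i"] low by blast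
    then show "\<exists>L. (\<lambda>l. (T ^^ l) a i) \<longlonglongrightarrow> L \<and> (\<forall>l. L \<le> (T ^^ l) a i)" by blast
  qed
  then obtain u where u: "\<And>i. (\<lambda>l. (T ^^ l) a i) \<longlonglongrightarrow> u i" "\<And>i l. u i \<le> (T ^^ l) a i"
    by metis
  have pu: "p i \<le> u i" for i
    using LIMSEQ_le_const[OF u(1)[of i], of "p i"] low by blast
  have u0: "\<forall>i. u i \<ge> 0" using pu p by (meson less_imp_le order_trans)
  have upos: "\<forall>i. u i > 0" using pu p by (meson less_le_trans)
  have Tu1: "T u i \<le> u i" for i
  proof -
    have "\<forall>l. T u i \<le> (T ^^ Suc l) a i"
      using si_mono[OF T u0, of "(T ^^ _) a" i] u(2) by simp
    then have "\<forall>l. T u i \<le> (\<lambda>l. (T ^^ l) a i) (Suc l)" by simp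
    then show ?thesis using LIMSEQ_le_const[OF LIMSEQ_Suc[OF u(1)[of i]], of "T u i"] by blast
  qed
  have Tu2: "u i \<le> T u i" for i
  proof (rule real_le_by_scale)
    show "T u i > 0" using si_pos[OF T u0] by simp
    fix \<beta> :: real assume \<beta>: "\<beta> > 1"
    have "\<forall>k. eventually (\<lambda>l. (T ^^ l) a k < \<beta> * u k) sequentially"
    proof
      fix k
      have "\<beta> * u k > u k" using upos \<beta> by simp
      then show "eventually (\<lambda>l. (T ^^ l) a k < \<beta> * u k) sequentially"
        using order_tendstoD(2)[OF u(1)[of k]] by blast
    qed
    then have "eventually (\<lambda>l. \<forall>k. (T ^^ l) a k < \<beta> * u k) sequentially"
      by (intro eventually_all_finite) auto
    then obtain l where l: "\<forall>k. (T ^^ l) a k < \<beta> * u k"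
      by (auto simp: eventually_sequentially)
    have "u i \<le> (T ^^ Suc l) a i" using u(2) by blast
    also have "\<dots> = T ((T ^^ l) a) i" by simp
    also have "\<dots> \<le> T (\<lambda>k. \<beta> * u k) i"
      by (rule si_mono[OF T]) (use si_iter_nonneg[OF T a0] l in \<open>auto intro: less_imp_le\<close>)
    also have "\<dots> \<le> \<beta> * T u i" using si_scal[OF T u0 \<beta>, of i] by simp
    finally show "u i \<le> \<beta> * T u i" .
  qed
  have "T u = u" using Tu1 Tu2 by (intro ext antisym)
  then have "u = p" using si_unique[OF T p upos] by simp
  then show ?thesis using u(1) unfolding a_def by simp
qed

lemma si_lower:
  fixes T :: "('n::finite \<Rightarrow> real) \<Rightarrow> ('n \<Rightarrow> real)"
  assumes T: "standard_interference T" and p: "\<forall>i. p i > 0" "T p = p" and \<alpha>: "\<alpha> > 1"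
  shows "(\<lambda>l. (T ^^ l) (\<lambda>k. p k / \<alpha>) i) \<longlonglongrightarrow> p i"
proof -
  define a where "a = (\<lambda>k. p k / \<alpha>)"
  have a0: "\<forall>i. a i \<ge> 0" using p \<alpha> unfolding a_def by (simp add: less_imp_le)
  have apos: "\<forall>i. a i > 0" using p \<alpha> unfolding a_def by simp
  have aa: "(\<lambda>k. \<alpha> * a k) = p" using \<alpha> unfolding a_def by auto
  have Ta: "\<forall>i. a i \<le> T a i"
  proof
    fix i
    have "p i < \<alpha> * T a i" using si_scal[OF T a0 \<alpha>, of i] aa p by simp
    then show "a i \<le> T a i" unfolding a_def using \<alpha> by (simp add: field_simps)
  qed
  have pa: "\<forall>i. a i \<le> p i" using p \<alpha> unfolding a_def by (simp add: divide_le_eq less_imp_le)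
  have inc: "(T ^^ l) a i \<le> (T ^^ Suc l) a i" for l i
  proof -
    have "(T ^^ l) a i \<le> (T ^^ l) (T a) i"
      by (rule si_iter_mono[OF T]) (use a0 Ta in \<open>auto\<close>)
    then show ?thesis by (simp add: funpow_Suc_right del: funpow.simps)
  qed
  have up: "(T ^^ l) a i \<le> p i" for l i
  proof -
    have "(T ^^ l) a i \<le> (T ^^ l) p i" by (rule si_iter_mono[OF T]) (use a0 pa in auto)
    moreover have "(T ^^ l) p = p" by (induction l) (use p in auto)
    ultimately show ?thesis by simp
  qed
  have "\<forall>i. \<exists>L. (\<lambda>l. (T ^^ l) a i) \<longlonglongrightarrow> L \<and> (\<forall>l. (T ^^ l) a i \<le> L)"
  proof
    fix i
    have "incseq (\<lambda>l. (T ^^ l) a i)" by (rule incseq_SucI) (use inc in auto)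
    then obtain L where "(\<lambda>l. (T ^^ l) a i) \<longlonglongrightarrow> L" "\<forall>l. (T ^^ l) a i \<le> L"
      using incseq_convergent[of "\<lambda>l. (T ^^ l) a i" "p i"] up by blast
    then show "\<exists>L. (\<lambda>l. (T ^^ l) a i) \<longlonglongrightarrow> L \<and> (\<forall>l. (T ^^ l) a i \<le> L)" by blast
  qed
  then obtain v where v: "\<And>i. (\<lambda>l. (T ^^ l) a i) \<longlonglongrightarrow> v i" "\<And>i l. (T ^^ l) a i \<le> v i"
    by metis
  have av: "a i \<le> v i" for i using v(2)[where l=0] by simp
  have v0: "\<forall>i. v i \<ge> 0" using av a0 by (meson order_trans)
  have vpos: "\<forall>i. v i > 0" using av apos by (meson less_le_trans)
  have Tv1: "v i \<le> T v i" for i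
  proof -
    have "\<forall>l. (T ^^ Suc l) a i \<le> T v i"
    proof
      fix l
      show "(T ^^ Suc l) a i \<le> T v i"
        using si_mono[OF T, of "(T ^^ l) a" v i] si_iter_nonneg[OF T a0] v(2) by simp
    qed
    then have "\<forall>l. (\<lambda>l. (T ^^ l) a i) (Suc l) \<le> T v i" by simp
    then show ?thesis using LIMSEQ_le_const2[OF LIMSEQ_Suc[OF v(1)[of i]], of "T v i"] by blast
  qed
  have Tv2: "T v i \<le> v i" for i
  proof (rule real_le_by_scale)
    show "v i > 0" using vpos by simp
    fix \<beta> :: real assume \<beta>: "\<beta> > 1"
    define w where "w = (\<lambda>k. v k / \<beta>)"
    have w0: "\<forall>k. w k \<ge> 0" using v0 \<beta> unfolding w_def by simp
    have ww: "(\<lambda>k. \<beta> * w k) = v" using \<beta> unfolding w_def by auto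
    have "\<forall>k. eventually (\<lambda>l. w k < (T ^^ l) a k) sequentially"
    proof
      fix k
      have "w k < v k" using vpos \<beta> unfolding w_def by (simp add: divide_less_eq)
      then show "eventually (\<lambda>l. w k < (T ^^ l) a k) sequentially"
        using order_tendstoD(1)[OF v(1)[of k]] by blast
    qed
    then have "eventually (\<lambda>l. \<forall>k. w k < (T ^^ l) a k) sequentially"
      by (intro eventually_all_finite) auto
    then obtain l where l: "\<forall>k. w k < (T ^^ l) a k"
      by (auto simp: eventually_sequentially)
    have 1: "T v i < \<beta> * T w i" using si_scal[OF T w0 \<beta>, of i] ww by simp
    have 2: "T w i \<le> T ((T ^^ l) a) i"
      by (rule si_mono[OF T w0]) (use l in \<open>auto intro: less_imp_le\<close>)
    have 3: "T ((T ^^ l) a) i \<le> v i" using v(2)[where l="Suc l"] by simp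
    have "T w i \<le> v i" using 2 3 by simp
    then have "\<beta> * T w i \<le> \<beta> * v i" using \<beta> by simp
    then show "T v i \<le> \<beta> * v i" using 1 by simp
  qed
  have "T v = v" using Tv1 Tv2 by (intro ext antisym)
  then have "v = p" using si_unique[OF T p vpos] by simp
  then show ?thesis using v(1) unfolding a_def by simp
qed

lemma si_converge:
  fixes T :: "('n::finite \<Rightarrow> real) \<Rightarrow> ('n \<Rightarrow> real)"
  assumes T: "standard_interference T" and p: "\<forall>i. p i > 0" "T p = p"
    and p0: "\<forall>i. p0 i > 0"
  shows "(\<lambda>l. (T ^^ l) p0 i) \<longlonglongrightarrow> p i"
proof -
  define \<alpha> where "\<alpha> = 1 + (\<Sum>k\<in>UNIV. p0 k / p k + p k / p0 k)"
  have nn: "\<And>k. 0 \<le> p0 k / p k + p k / p0 k" using p p0 by (simp add: less_imp_le)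
  have ge: "p0 k / p k + p k / p0 k \<le> (\<Sum>k\<in>UNIV. p0 k / p k + p k / p0 k)" for k
    by (rule member_le_sum) (use nn in auto)
  have sp: "0 < p0 k / p k + p k / p0 k" for k using p p0 by (simp add: add_pos_pos)
  have \<alpha>1: "\<alpha> > 1" unfolding \<alpha>_def using ge[of undefined] sp[of undefined] by linarith
  have up: "p0 k \<le> \<alpha> * p k" for k
  proof -
    have "p0 k / p k \<le> \<alpha>" using ge[of k] p p0 unfolding \<alpha>_def
      by (smt (verit) divide_pos_pos)
    then show ?thesis using p by (simp add: divide_le_eq)
  qed
  have lo: "p k / \<alpha> \<le> p0 k" for k
  proof -
    have "p k / p0 k \<le> \<alpha>" using ge[of k] p p0 unfolding \<alpha>_def
      by (smt (verit) divide_pos_pos)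
    then show ?thesis using p0 \<alpha>1 by (simp add: divide_le_eq mult.commute)
  qed
  show ?thesis
  proof (rule real_tendsto_sandwich)
    show "eventually (\<lambda>l. (T ^^ l) (\<lambda>k. p k / \<alpha>) i \<le> (T ^^ l) p0 i) sequentially"
      by (intro always_eventually allI si_iter_mono[OF T]) (use p \<alpha>1 lo in \<open>auto intro: less_imp_le\<close>)
    show "eventually (\<lambda>l. (T ^^ l) p0 i \<le> (T ^^ l) (\<lambda>k. \<alpha> * p k) i) sequentially"
      by (intro always_eventually allI si_iter_mono[OF T]) (use p0 up in \<open>auto intro: less_imp_le\<close>)
  qed (use si_lower[OF T p \<alpha>1] si_upper[OF T p \<alpha>1] in auto)
qed



locale netw =
  fixes J :: "'n::{finite,linorder} \<Rightarrow> 'u set"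
    and g :: "'n \<Rightarrow> 'u \<Rightarrow> real" and \<sigma>2 :: real
    and x :: "'n \<Rightarrow> real" and r :: "'n \<Rightarrow> 'u \<Rightarrow> real"
  assumes J_fin: "\<forall>i. finite (J i)"
    and J_ne: "\<forall>i. J i \<noteq> {}"
    and g_pos: "\<forall>k. \<forall>j\<in>(\<Union>i. J i). g k j > 0"
    and \<sigma>_pos: "\<sigma>2 > 0"
    and x_pos: "\<forall>i. x i > 0"
    and r_pos: "\<forall>i. \<forall>j\<in>J i. r i j > 0"
begin

abbreviation "E \<equiv> eta g \<sigma>2 J x r"
abbreviation "H \<equiv> h_comp g \<sigma>2 J x r"

definition Dn :: "('n \<Rightarrow> real) \<Rightarrow> 'n \<Rightarrow> 'u \<Rightarrow> real" where
  "Dn p i j = (\<Sum>k\<in>UNIV - {i}. p k * g k j * x k) + \<sigma>2"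

lemma eta_eq: "E p i q = (\<Sum>j\<in>J i. (r i j / x i) / ln (1 + q * g i j / Dn p i j))"
  unfolding eta_def Dn_def by simp

lemma gpos: "j \<in> J i \<Longrightarrow> g k j > 0" using g_pos by blast

lemma Dn_pos: assumes "\<forall>k. p k \<ge> 0" "j \<in> J i" shows "Dn p i j > 0"
proof -
  have "(\<Sum>k\<in>UNIV - {i}. p k * g k j * x k) \<ge> 0"
    using assms gpos[OF assms(2)] x_pos by (intro sum_nonneg) (simp add: less_imp_le)
  then show ?thesis unfolding Dn_def using \<sigma>_pos by simp
qed

lemma c_pos: "j \<in> J i \<Longrightarrow> r i j / x i > 0" using r_pos x_pos by simp

lemma arg_pos: assumes "\<forall>k. p k \<ge> 0" "j \<in> J i" "q > 0" shows "q * g i j / Dn p i j > 0"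
  using Dn_pos[OF assms(1,2)] gpos[OF assms(2)] assms(3) by simp

lemma ln_pos': "t > 0 \<Longrightarrow> ln (1 + t) > (0::real)" by simp

lemma eta_strict_dec:
  assumes p: "\<forall>k. p k \<ge> 0" and q: "0 < q" "q < q'"
  shows "E p i q' < E p i q"
  unfolding eta_eq
proof (rule sum_strict_mono)
  show "finite (J i)" "J i \<noteq> {}" using J_fin J_ne by auto
  fix j assume j: "j \<in> J i"
  have a: "q * g i j / Dn p i j < q' * g i j / Dn p i j"
    using Dn_pos[OF p j] gpos[OF j] q by (simp add: divide_strict_right_mono)
  have b: "ln (1 + q * g i j / Dn p i j) > 0" using arg_pos[OF p j q(1)] by simp
  have c: "ln (1 + q * g i j / Dn p i j) < ln (1 + q' * g i j / Dn p i j)"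
    using a arg_pos[OF p j q(1)] by simp
  show "r i j / x i / ln (1 + q' * g i j / Dn p i j) < r i j / x i / ln (1 + q * g i j / Dn p i j)"
    by (rule divide_strict_left_mono) (use b c c_pos[OF j] in auto)
qed

lemma eta_exists:
  assumes p: "\<forall>k. p k \<ge> 0"
  shows "\<exists>q>0. E p i q = 1"
proof -
  define c where "c j = r i j / x i" for j
  define a where "a j = g i j / Dn p i j" for j
  have cp: "j \<in> J i \<Longrightarrow> c j > 0" for j unfolding c_def using c_pos by simp
  have ap: "j \<in> J i \<Longrightarrow> a j > 0" for j unfolding a_def using Dn_pos[OF p] gpos by simp
  have Eq: "E p i q = (\<Sum>j\<in>J i. c j / ln (1 + q * a j))" for q
    unfolding eta_eq c_def a_def by (simp add: times_divide_eq_right)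
  have fin: "finite (J i)" and ne: "J i \<noteq> {}" using J_fin J_ne by auto
  obtain j0 where j0: "j0 \<in> J i" using ne by blast
  define q1 where "q1 = c j0 / (2 * a j0)"
  have q1p: "q1 > 0" unfolding q1_def using cp[OF j0] ap[OF j0] by simp
  have tn: "q > 0 \<Longrightarrow> j \<in> J i \<Longrightarrow> c j / ln (1 + q * a j) \<ge> 0" for q j
    using cp ap by (simp add: less_imp_le)
  have E1: "E p i q1 > 1"
  proof -
    have "q1 * a j0 = c j0 / 2" unfolding q1_def using ap[OF j0] by simp
    then have l: "ln (1 + q1 * a j0) \<le> c j0 / 2"
      using ln_add_one_self_le_self[of "q1 * a j0"] cp[OF j0] by simp
    have lp: "ln (1 + q1 * a j0) > 0" using mult_pos_pos[OF q1p ap[OF j0]] by (intro ln_gt_zero) simp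
    have "c j0 / ln (1 + q1 * a j0) \<ge> c j0 / (c j0 / 2)"
      by (rule divide_left_mono) (use l lp cp[OF j0] in auto)
    then have "c j0 / ln (1 + q1 * a j0) \<ge> 2" using cp[OF j0] by simp
    moreover have "c j0 / ln (1 + q1 * a j0) \<le> (\<Sum>j\<in>J i. c j / ln (1 + q1 * a j))"
      by (rule member_le_sum) (use j0 fin tn q1p in auto)
    ultimately show ?thesis unfolding Eq by simp
  qed
  define N where "N = real (card (J i))"
  have Np: "N > 0" unfolding N_def using fin ne by (simp add: card_gt_0_iff)
  define q2 where "q2 = 1 + (\<Sum>j\<in>J i. exp (N * c j) / a j)"
  have q2ge: "j \<in> J i \<Longrightarrow> exp (N * c j) / a j < q2" for j
  proof -
    assume j: "j \<in> J i"
    have "exp (N * c j) / a j \<le> (\<Sum>j\<in>J i. exp (N * c j) / a j)"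
      by (rule member_le_sum) (use j fin ap in \<open>auto intro: less_imp_le\<close>)
    then show ?thesis unfolding q2_def by simp
  qed
  have q2p: "q2 > 0" using q2ge[OF j0] ap[OF j0] by (smt (verit) divide_pos_pos exp_gt_zero)
  have E2: "E p i q2 < 1"
  proof -
    have "(\<Sum>j\<in>J i. c j / ln (1 + q2 * a j)) < (\<Sum>j\<in>J i. 1 / N)"
    proof (rule sum_strict_mono[OF fin ne])
      fix j assume j: "j \<in> J i"
      have "exp (N * c j) < q2 * a j" using q2ge[OF j] ap[OF j] by (simp add: divide_less_eq)
      then have "N * c j < ln (1 + q2 * a j)"
        by (smt (verit) exp_gt_zero ln_less_cancel_iff ln_exp)
      moreover have "N * c j > 0" using Np cp[OF j] by simp
      ultimately have "c j / ln (1 + q2 * a j) < c j / (N * c j)"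
        by (intro divide_strict_left_mono) (use cp[OF j] in auto)
      then show "c j / ln (1 + q2 * a j) < 1 / N" using cp[OF j] by simp
    qed
    also have "(\<Sum>j\<in>J i. 1 / N) = 1" unfolding N_def using fin ne by (simp add: card_gt_0_iff)
    finally show ?thesis unfolding Eq .
  qed
  have q12: "q1 \<le> q2"
  proof (rule ccontr)
    assume "\<not> q1 \<le> q2"
    then have "E p i q1 < E p i q2" using eta_strict_dec[OF p q2p] by simp
    then show False using E1 E2 by simp
  qed
  have cont: "continuous_on {q1..q2} (E p i)"
  proof -
    have "continuous_on {q1..q2} (\<lambda>q. \<Sum>j\<in>J i. c j / ln (1 + q * a j))"
    proof (intro continuous_on_sum continuous_on_divide continuous_on_ln continuous_intros ballI)
      fix j q assume j: "j \<in> J i" and q: "q \<in> {q1..q2}"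
      then have "q > 0" using q1p by auto
      then have "ln (1 + q * a j) > 0" using mult_pos_pos[OF _ ap[OF j]] by (intro ln_gt_zero) simp
      then show "ln (1 + q * a j) \<noteq> 0" "1 + q * a j \<noteq> 0" by auto
    qed
    then show ?thesis unfolding Eq .
  qed
  obtain q where q: "q1 \<le> q" "q \<le> q2" "E p i q = 1"
    using IVT2'[of "E p i" q2 1 q1, OF _ _ q12 cont] E1 E2 by auto
  have "q > 0" using q(1) q1p by linarith
  then show ?thesis using q(3) by blast
qed

lemma H_spec:
  assumes p: "\<forall>k. p k \<ge> 0"
  shows "H p i > 0 \<and> E p i (H p i) = 1"
proof -
  have ex1: "\<exists>!q. q > 0 \<and> E p i q = 1"
  proof -
    obtain q where q: "q > 0" "E p i q = 1" using eta_exists[OF p] by blast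
    moreover have "q' = q" if "q' > 0" "E p i q' = 1" for q'
      using eta_strict_dec[OF p, of q q' i] eta_strict_dec[OF p, of q' q i] q that
      by (cases q q' rule: linorder_cases) auto
    ultimately show ?thesis by blast
  qed
  show ?thesis unfolding h_comp_def using theI'[OF ex1] .
qed

lemma H_unique:
  assumes p: "\<forall>k. p k \<ge> 0" and q: "q > 0" "E p i q = 1"
  shows "H p i = q"
  using H_spec[OF p, of i] eta_strict_dec[OF p, of q "H p i" i] eta_strict_dec[OF p, of "H p i" q i] q
  by (cases q "H p i" rule: linorder_cases) auto

lemma H_ge:
  assumes p: "\<forall>k. p k \<ge> 0" and q: "q > 0" "E p i q \<ge> 1"
  shows "q \<le> H p i"
  using H_spec[OF p, of i] eta_strict_dec[OF p, of "H p i" q i] q by force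

lemma H_lt:
  assumes p: "\<forall>k. p k \<ge> 0" and q: "q > 0" "E p i q < 1"
  shows "H p i < q"
proof (rule ccontr)
  assume "\<not> H p i < q"
  then have "q < H p i \<or> q = H p i" by auto
  then show False
  proof
    assume "q < H p i"
    then show False using H_spec[OF p, of i] eta_strict_dec[OF p q(1), of "H p i" i] q by simp
  next
    assume "q = H p i" then show False using H_spec[OF p, of i] q by simp
  qed
qed

lemma eta_mono_p:
  assumes p': "\<forall>k. p' k \<ge> 0" and le: "\<forall>k. p' k \<le> p k" and q: "q > 0"
  shows "E p' i q \<le> E p i q"
  unfolding eta_eq
proof (rule sum_mono)
  have p: "\<forall>k. p k \<ge> 0" using p' le by (meson order_trans)
  fix j assume j: "j \<in> J i"
  have D: "Dn p' i j \<le> Dn p i j" unfolding Dn_def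
    using le gpos[OF j] x_pos by (auto intro!: sum_mono mult_right_mono simp: less_imp_le)
  have a: "q * g i j / Dn p i j \<le> q * g i j / Dn p' i j"
    by (rule divide_left_mono) (use D Dn_pos[OF p j] Dn_pos[OF p' j] less_imp_le[OF mult_pos_pos[OF q gpos[OF j]]] in auto)
  have b: "ln (1 + q * g i j / Dn p i j) > 0" using arg_pos[OF p j q] by simp
  have c: "ln (1 + q * g i j / Dn p i j) \<le> ln (1 + q * g i j / Dn p' i j)"
    using a arg_pos[OF p j q] by simp
  show "r i j / x i / ln (1 + q * g i j / Dn p' i j) \<le> r i j / x i / ln (1 + q * g i j / Dn p i j)"
    by (rule divide_left_mono) (use b c c_pos[OF j] in \<open>auto intro: less_imp_le\<close>)
qed

lemma H_mono:
  assumes p': "\<forall>k. p' k \<ge> 0" and le: "\<forall>k. p' k \<le> p k"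
  shows "H p' i \<le> H p i"
proof -
  have p: "\<forall>k. p k \<ge> 0" using p' le by (meson order_trans)
  show ?thesis
    using H_spec[OF p', of i] eta_mono_p[OF p' le, of "H p' i" i] by (intro H_ge[OF p]) auto
qed

lemma H_scal:
  assumes p: "\<forall>k. p k \<ge> 0" and \<alpha>: "\<alpha> > 1"
  shows "H (\<lambda>k. \<alpha> * p k) i < \<alpha> * H p i"
proof -
  define q where "q = H p i"
  have q: "q > 0" "E p i q = 1" using H_spec[OF p] unfolding q_def by auto
  have ap: "\<forall>k. \<alpha> * p k \<ge> 0" using p \<alpha> by simp
  have "E (\<lambda>k. \<alpha> * p k) i (\<alpha> * q) < E p i q"
    unfolding eta_eq
  proof (rule sum_strict_mono)
    show "finite (J i)" "J i \<noteq> {}" using J_fin J_ne by auto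
    fix j assume j: "j \<in> J i"
    define I where "I = (\<Sum>k\<in>UNIV - {i}. p k * g k j * x k)"
    have I0: "I \<ge> 0" using Dn_pos[OF p j] unfolding I_def
      using p gpos[OF j] x_pos by (intro sum_nonneg) (simp add: less_imp_le)
    have D1: "Dn p i j = I + \<sigma>2" unfolding Dn_def I_def ..
    have D2: "Dn (\<lambda>k. \<alpha> * p k) i j = \<alpha> * I + \<sigma>2" unfolding Dn_def I_def
      by (simp add: sum_distrib_left mult.assoc)
    have gq: "q * g i j > 0" using q gpos[OF j] by simp
    have "q * g i j / Dn p i j = (\<alpha> * q * g i j) / (\<alpha> * I + \<alpha> * \<sigma>2)"
      unfolding D1 using \<alpha> by (simp add: distrib_left[symmetric])
    also have "\<dots> < (\<alpha> * q * g i j) / (\<alpha> * I + \<sigma>2)"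
    proof (rule divide_strict_left_mono)
      show "\<alpha> * I + \<sigma>2 < \<alpha> * I + \<alpha> * \<sigma>2" using \<alpha> \<sigma>_pos by simp
      show "0 < \<alpha> * q * g i j" using \<alpha> gq by (simp add: mult.assoc)
      have "0 \<le> \<alpha> * I" using \<alpha> I0 by simp
      then have "0 < \<alpha> * I + \<sigma>2" using \<sigma>_pos by linarith
      moreover have "0 < \<alpha> * I + \<alpha> * \<sigma>2" using \<open>0 \<le> \<alpha> * I\<close> \<alpha> \<sigma>_pos by (smt (verit) mult_pos_pos)
      ultimately show "0 < (\<alpha> * I + \<alpha> * \<sigma>2) * (\<alpha> * I + \<sigma>2)" by simp
    qed
    finally have a: "q * g i j / Dn p i j < \<alpha> * q * g i j / Dn (\<lambda>k. \<alpha> * p k) i j" unfolding D2 .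
    have b: "ln (1 + q * g i j / Dn p i j) > 0" using arg_pos[OF p j q(1)] by simp
    have c: "ln (1 + q * g i j / Dn p i j) < ln (1 + \<alpha> * q * g i j / Dn (\<lambda>k. \<alpha> * p k) i j)"
      using a arg_pos[OF p j q(1)] by simp
    show "r i j / x i / ln (1 + \<alpha> * q * g i j / Dn (\<lambda>k. \<alpha> * p k) i j) < r i j / x i / ln (1 + q * g i j / Dn p i j)"
      by (rule divide_strict_left_mono) (use b c c_pos[OF j] in auto)
  qed
  then have "E (\<lambda>k. \<alpha> * p k) i (\<alpha> * q) < 1" using q by simp
  then have "H (\<lambda>k. \<alpha> * p k) i < \<alpha> * q" using q \<alpha> by (intro H_lt[OF ap]) auto
  then show ?thesis unfolding q_def .
qed

lemma h_si: "standard_interference (h_vec g \<sigma>2 J x r)"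
  unfolding standard_interference_def h_vec_def
  using H_spec H_mono H_scal by blast


definition ST where "ST i q = q(i := H q i)"

lemma fold_pos:
  "\<forall>k. q k \<ge> 0 \<Longrightarrow> (\<forall>k. fold ST xs q k \<ge> 0) \<and> (\<forall>k. (q k > 0 \<or> k \<in> set xs) \<longrightarrow> fold ST xs q k > 0)"
proof (induction xs arbitrary: q)
  case Nil then show ?case by auto
next
  case (Cons a xs)
  define q' where "q' = q(a := H q a)"
  have Ha: "H q a > 0" using H_spec[OF Cons.prems] by blast
  have q'0: "\<forall>k. q' k \<ge> 0" using Cons.prems Ha unfolding q'_def by (simp add: less_imp_le)
  have q'p: "q' k > 0" if "q k > 0 \<or> k = a" for k using that Ha unfolding q'_def by auto
  have e: "fold ST (a # xs) q = fold ST xs q'" unfolding q'_def by (simp add: ST_def)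
  show ?case unfolding e using Cons.IH[OF q'0] q'p by auto
qed

lemma fold_mono:
  "\<forall>k. q' k \<ge> 0 \<Longrightarrow> \<forall>k. q' k \<le> q k \<Longrightarrow> fold ST xs q' k \<le> fold ST xs q k"
proof (induction xs arbitrary: q q' k)
  case Nil then show ?case by auto
next
  case (Cons a xs)
  have s1: "\<forall>k. (q'(a := H q' a)) k \<ge> 0" using Cons.prems(1) H_spec[OF Cons.prems(1), of a] by auto
  have s2: "\<forall>k. (q'(a := H q' a)) k \<le> (q(a := H q a)) k" using Cons.prems H_mono[OF Cons.prems, of a] by auto
  show ?case using Cons.IH[OF s1 s2] by (simp add: ST_def)
qed

lemma fold_scal:
  assumes \<alpha>: "\<alpha> > 1"
  shows "\<forall>k. s k \<ge> 0 \<Longrightarrow> \<forall>k. s' k \<ge> 0 \<Longrightarrow> \<forall>k. s' k \<le> \<alpha> * s k \<Longrightarrow>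
    fold ST xs s' k \<le> \<alpha> * fold ST xs s k \<and> ((s' k < \<alpha> * s k \<or> k \<in> set xs) \<longrightarrow> fold ST xs s' k < \<alpha> * fold ST xs s k)"
proof (induction xs arbitrary: s s' k)
  case Nil then show ?case by auto
next
  case (Cons a xs)
  define t where "t = s(a := H s a)"
  define t' where "t' = s'(a := H s' a)"
  have as0: "\<forall>k. \<alpha> * s k \<ge> 0" using Cons.prems(1) \<alpha> by simp
  have Ha: "H s' a < \<alpha> * H s a"
    using H_mono[OF Cons.prems(2,3), of a] H_scal[OF Cons.prems(1) \<alpha>, of a] by simp
  have t0: "\<forall>k. t k \<ge> 0" using Cons.prems(1) H_spec[OF Cons.prems(1), of a] unfolding t_def by auto
  have t'0: "\<forall>k. t' k \<ge> 0" using Cons.prems(2) H_spec[OF Cons.prems(2), of a] unfolding t'_def by auto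
  have tt: "\<forall>k. t' k \<le> \<alpha> * t k" using Cons.prems(3) Ha unfolding t_def t'_def by auto
  have tt2: "t' k < \<alpha> * t k" if "s' k < \<alpha> * s k \<or> k = a" for k
    using that Ha unfolding t_def t'_def by auto
  have e: "fold ST (a # xs) s = fold ST xs t" "fold ST (a # xs) s' = fold ST xs t'"
    unfolding t_def t'_def by (simp_all add: ST_def)
  show ?case unfolding e using Cons.IH[OF t0 t'0 tt, of k] tt2[of k] by auto
qed

lemma fold_fix: "\<forall>k. H p k = p k \<Longrightarrow> fold ST xs p = p"
  by (induction xs) (auto simp: ST_def)

lemma sweep_eq: "iap_async_sweep g \<sigma>2 J x r = fold ST (sorted_list_of_set (UNIV :: 'n set))"
  unfolding iap_async_sweep_def ST_def[abs_def] by (rule ext) simp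

lemma sweep_si: "standard_interference (iap_async_sweep g \<sigma>2 J x r)"
  unfolding standard_interference_def sweep_eq
proof (intro conjI allI impI)
  fix p :: "'n \<Rightarrow> real" and i assume "\<forall>i. 0 \<le> p i"
  then show "0 < fold ST (sorted_list_of_set UNIV) p i" using fold_pos by simp
next
  fix p p' :: "'n \<Rightarrow> real" and i assume "(\<forall>i. 0 \<le> p' i) \<and> (\<forall>i. p' i \<le> p i)"
  then show "fold ST (sorted_list_of_set UNIV) p' i \<le> fold ST (sorted_list_of_set UNIV) p i"
    using fold_mono by blast
next
  fix p :: "'n \<Rightarrow> real" and \<alpha> :: real and i assume p: "\<forall>i. 0 \<le> p i" and \<alpha>: "1 < \<alpha>"
  have "\<forall>k. \<alpha> * p k \<ge> 0" using p \<alpha> by simp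
  then show "fold ST (sorted_list_of_set UNIV) (\<lambda>k. \<alpha> * p k) i < \<alpha> * fold ST (sorted_list_of_set UNIV) p i"
    using fold_scal[OF \<alpha> p, of "\<lambda>k. \<alpha> * p k" "sorted_list_of_set UNIV" i] by simp
qed

lemma load_eta: "load_f g \<sigma>2 J x r p i = x i * E p i (p i)"
  unfolding load_f_def eta_def sum_distrib_left using x_pos
  by (intro sum.cong refl) (simp add: less_imp_neq[symmetric])

lemma main:
  shows
    "(\<forall>p. (\<forall>i. p i > 0) \<longrightarrow>
        ((\<forall>i. x i = load_f g \<sigma>2 J x r p i) \<longleftrightarrow> p = h_vec g \<sigma>2 J x r p))
     \<and> standard_interference (h_vec g \<sigma>2 J x r)
     \<and> (\<forall>p. (\<forall>i. p i > 0) \<and> p = h_vec g \<sigma>2 J x r p \<longrightarrow>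
          (\<forall>q. (\<forall>i. q i > 0) \<and> q = h_vec g \<sigma>2 J x r q \<longrightarrow> q = p)
          \<and> (\<forall>p0. (\<forall>i. p0 i > 0) \<longrightarrow>
               (\<forall>i. (\<lambda>l. ((h_vec g \<sigma>2 J x r) ^^ l) p0 i) \<longlonglongrightarrow> p i)
             \<and> (\<forall>i. (\<lambda>l. ((iap_async_sweep g \<sigma>2 J x r) ^^ l) p0 i) \<longlonglongrightarrow> p i)))"
proof (intro conjI allI impI)
  fix p :: "'n \<Rightarrow> real" assume pp: "\<forall>i. p i > 0"
  have p0: "\<forall>k. p k \<ge> 0" using pp by (simp add: less_imp_le)
  have "(x i = load_f g \<sigma>2 J x r p i) \<longleftrightarrow> p i = H p i" for i
  proof -
    have "(x i = load_f g \<sigma>2 J x r p i) \<longleftrightarrow> E p i (p i) = 1"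
      unfolding load_eta using x_pos[rule_format, of i] by auto
    also have "\<dots> \<longleftrightarrow> p i = H p i"
      using H_unique[OF p0 pp[rule_format, of i], of i] H_spec[OF p0, of i] by metis
    finally show ?thesis .
  qed
  then show "(\<forall>i. x i = load_f g \<sigma>2 J x r p i) \<longleftrightarrow> p = h_vec g \<sigma>2 J x r p"
    unfolding h_vec_def fun_eq_iff by simp
next
  show "standard_interference (h_vec g \<sigma>2 J x r)" by (rule h_si)
next
  fix p q :: "'n \<Rightarrow> real"
  assume p: "(\<forall>i. p i > 0) \<and> p = h_vec g \<sigma>2 J x r p"
    and q: "(\<forall>i. q i > 0) \<and> q = h_vec g \<sigma>2 J x r q"
  then show "q = p" using si_unique[OF h_si, of p q] by metis
next
  fix p p0 :: "'n \<Rightarrow> real" and i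
  assume p: "(\<forall>i. p i > 0) \<and> p = h_vec g \<sigma>2 J x r p" and p0: "\<forall>i. p0 i > 0"
  then show "(\<lambda>l. ((h_vec g \<sigma>2 J x r) ^^ l) p0 i) \<longlonglongrightarrow> p i"
    using si_converge[OF h_si, of p p0 i] by metis
next
  fix p p0 :: "'n \<Rightarrow> real" and i
  assume p: "(\<forall>i. p i > 0) \<and> p = h_vec g \<sigma>2 J x r p" and p0: "\<forall>i. p0 i > 0"
  have Hp: "\<forall>k. H p k = p k" using p unfolding h_vec_def fun_eq_iff by metis
  have "iap_async_sweep g \<sigma>2 J x r p = p" unfolding sweep_eq using fold_fix[OF Hp] by simp
  then show "(\<lambda>l. ((iap_async_sweep g \<sigma>2 J x r) ^^ l) p0 i) \<longlonglongrightarrow> p i"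
    using si_converge[OF sweep_si, of p p0 i] p p0 by blast
qed

end

theorem theorem2:
  fixes J :: "'n::{finite,linorder} \<Rightarrow> 'u set"
    and g :: "'n \<Rightarrow> 'u \<Rightarrow> real" and \<sigma>2 :: real
    and x :: "'n \<Rightarrow> real" and r :: "'n \<Rightarrow> 'u \<Rightarrow> real"
  assumes J_fin: "\<forall>i. finite (J i)"
    and J_ne: "\<forall>i. J i \<noteq> {}"
    and J_disj: "\<forall>i k. i \<noteq> k \<longrightarrow> J i \<inter> J k = {}"
    and g_pos: "\<forall>k. \<forall>j\<in>(\<Union>i. J i). g k j > 0"
    and \<sigma>_pos: "\<sigma>2 > 0"
    and x_pos: "\<forall>i. x i > 0"
    and r_pos: "\<forall>i. \<forall>j\<in>J i. r i j > 0"
  shows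
    "(\<forall>p. (\<forall>i. p i > 0) \<longrightarrow>
        ((\<forall>i. x i = load_f g \<sigma>2 J x r p i) \<longleftrightarrow> p = h_vec g \<sigma>2 J x r p))
     \<and> standard_interference (h_vec g \<sigma>2 J x r)
     \<and> (\<forall>p. (\<forall>i. p i > 0) \<and> p = h_vec g \<sigma>2 J x r p \<longrightarrow>
          (\<forall>q. (\<forall>i. q i > 0) \<and> q = h_vec g \<sigma>2 J x r q \<longrightarrow> q = p)
          \<and> (\<forall>p0. (\<forall>i. p0 i > 0) \<longrightarrow>
               (\<forall>i. (\<lambda>l. ((h_vec g \<sigma>2 J x r) ^^ l) p0 i) \<longlonglongrightarrow> p i)
             \<and> (\<forall>i. (\<lambda>l. ((iap_async_sweep g \<sigma>2 J x r) ^^ l) p0 i) \<longlonglongrightarrow> p i)))"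
  proof -
  interpret netw J g \<sigma>2 x r
    by unfold_locales (use J_fin J_ne g_pos \<sigma>_pos x_pos r_pos in auto)
  show ?thesis by (rule main)
qed

end
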